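(* Let $E$ be a Euclidean space and let $T:E\to E$ be $\alpha$-averaged for some $\alpha\in\,]0,1[$. Then $\operatorname{Fix}T=\emptyset$ if and only if $\|T^k(x)\|\to\infty$ as $k\to\infty$ for every $x\in E$.
   Context: $E$ is a finite-dimensional real inner product space with norm $\|\cdot\|$. $T:E\to E$ is $\alpha$-averaged ($\alpha\in]0,1[$) if $T=(1-\alpha)\operatorname{Id}+\alpha R$ for some $R:E\to E$ with $\|R(x)-R(y)\|\le\|x-y\|$ for all $x,y$. $\operatorname{Fix}T=\{x\in E:T(x)=x\}$ and $T^k$ is the $k$-fold composition. *)

theory Defs
  imports "HOL-Analysis.Analysis"
begin

definition nonexpansive :: "('a::real_normed_vector \<Rightarrow> 'a) \<Rightarrow> bool" where
  "nonexpansive R \<longleftrightarrow> (\<forall>x y. norm (R x - R y) \<le> norm (x - y))"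

definition averaged :: "real \<Rightarrow> ('a::real_normed_vector \<Rightarrow> 'a) \<Rightarrow> bool" where
  "averaged \<alpha> T \<longleftrightarrow> 0 < \<alpha> \<and> \<alpha> < 1 \<and>
     (\<exists>R. nonexpansive R \<and> (\<forall>x. T x = (1 - \<alpha>) *\<^sub>R x + \<alpha> *\<^sub>R R x))"

definition Fix :: "('a \<Rightarrow> 'a) \<Rightarrow> 'a set" where
  "Fix T = {x. T x = x}"

end

theory Submission
  imports Defs
begin

lemma avg_nonexp:
  fixes T :: "'a::real_inner \<Rightarrow> 'a"
  assumes "averaged \<alpha> T"
  shows "norm (T x - T y) \<le> norm (x - y)"
proof -
  obtain R where a: "0 < \<alpha>" "\<alpha> < 1" and R: "nonexpansive R"
    and T: "\<And>x. T x = (1 - \<alpha>) *\<^sub>R x + \<alpha> *\<^sub>R R x"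
    using assms unfolding averaged_def by blast
  have "T x - T y = (1 - \<alpha>) *\<^sub>R (x - y) + \<alpha> *\<^sub>R (R x - R y)"
    by (simp add: T algebra_simps)
  also have "norm \<dots> \<le> (1 - \<alpha>) * norm (x - y) + \<alpha> * norm (R x - R y)"
    using a by (smt (verit) norm_scaleR norm_triangle_ineq)
  also have "\<dots> \<le> (1 - \<alpha>) * norm (x - y) + \<alpha> * norm (x - y)"
    using R a unfolding nonexpansive_def by (simp add: mult_left_mono)
  finally show ?thesis by (simp add: algebra_simps)
qed

lemma avg_eq:
  fixes T :: "'a::real_inner \<Rightarrow> 'a"
  assumes "averaged \<alpha> T" and eq: "norm (T x - T y) = norm (x - y)"
  shows "T x - T y = x - y"
proof -
  obtain R where a: "0 < \<alpha>" "\<alpha> < 1" and R: "nonexpansive R"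
    and T: "\<And>x. T x = (1 - \<alpha>) *\<^sub>R x + \<alpha> *\<^sub>R R x"
    using assms unfolding averaged_def by blast
  define u where "u = x - y"
  define w where "w = R x - R y"
  have Tw: "T x - T y = (1 - \<alpha>) *\<^sub>R u + \<alpha> *\<^sub>R w"
    by (simp add: T algebra_simps u_def w_def)
  have wu: "norm w \<le> norm u" using R unfolding nonexpansive_def u_def w_def by blast
  have id: "(norm ((1 - \<alpha>) *\<^sub>R u + \<alpha> *\<^sub>R w))\<^sup>2 =
     (1 - \<alpha>) * (norm u)\<^sup>2 + \<alpha> * (norm w)\<^sup>2 - \<alpha> * (1 - \<alpha>) * (norm (u - w))\<^sup>2"
    by (simp add: power2_norm_eq_inner inner_add_left inner_add_right inner_diff_left
        inner_diff_right inner_commute algebra_simps)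
  have "(norm u)\<^sup>2 = (1 - \<alpha>) * (norm u)\<^sup>2 + \<alpha> * (norm w)\<^sup>2 - \<alpha> * (1 - \<alpha>) * (norm (u - w))\<^sup>2"
    using eq Tw id u_def by simp
  moreover have "(norm w)\<^sup>2 \<le> (norm u)\<^sup>2" using wu by (simp add: power_mono)
  ultimately have "\<alpha> * (norm w)\<^sup>2 \<le> \<alpha> * (norm u)\<^sup>2" "(norm u)\<^sup>2 = (1 - \<alpha>) * (norm u)\<^sup>2 + \<alpha> * (norm w)\<^sup>2 - \<alpha> * (1 - \<alpha>) * (norm (u - w))\<^sup>2"
    using a by (simp_all add: mult_left_mono)
  hence c: "(\<alpha> * (1 - \<alpha>)) * (norm (u - w))\<^sup>2 \<le> 0"
    by (simp add: algebra_simps)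
  moreover have "\<alpha> * (1 - \<alpha>) > 0" using a by simp
  ultimately have "(norm (u - w))\<^sup>2 \<le> 0"
    by (metis mult_le_cancel_left_pos mult_zero_right)
  hence "u = w" by simp
  thus ?thesis using Tw u_def by (simp add: algebra_simps)
qed

lemma pow_nonexp:
  fixes T :: "'a::real_inner \<Rightarrow> 'a"
  assumes "averaged \<alpha> T"
  shows "norm ((T ^^ m) x - (T ^^ m) y) \<le> norm (x - y)"
proof (induction m)
  case 0 then show ?case by simp
next
  case (Suc m)
  then show ?case using avg_nonexp[OF assms, of "(T ^^ m) x" "(T ^^ m) y"] by simp
qed

lemma pow_tendsto:
  fixes T :: "'a::real_inner \<Rightarrow> 'a"
  assumes "averaged \<alpha> T" and "X \<longlonglongrightarrow> z"
  shows "(\<lambda>j. (T ^^ m) (X j)) \<longlonglongrightarrow> (T ^^ m) z"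
proof -
  have "(\<lambda>j. norm (X j - z)) \<longlonglongrightarrow> 0"
    using assms(2) by (simp add: LIM_zero_iff tendsto_norm_zero_iff)
  hence "(\<lambda>j. norm ((T ^^ m) (X j) - (T ^^ m) z)) \<longlonglongrightarrow> 0"
    by (rule Lim_null_comparison[rotated]) (simp add: pow_nonexp[OF assms(1)])
  thus ?thesis by (simp add: LIM_zero_iff tendsto_norm_zero_iff)
qed

theorem mainTheorem4:
  fixes T :: "'a::euclidean_space \<Rightarrow> 'a" and \<alpha> :: real
  assumes "\<alpha> \<in> {0<..<1}" and "averaged \<alpha> T"
  shows "Fix T = {} \<longleftrightarrow>
    (\<forall>x. filterlim (\<lambda>k. norm ((T ^^ k) x)) at_top sequentially)"
proof
  assume F: "Fix T = {}"
  show "\<forall>x. filterlim (\<lambda>k. norm ((T ^^ k) x)) at_top sequentially"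
  proof (rule allI, rule ccontr)
    fix x
    assume nt: "\<not> filterlim (\<lambda>k. norm ((T ^^ k) x)) at_top sequentially"
    then obtain Z where "\<not> eventually (\<lambda>k. Z \<le> norm ((T ^^ k) x)) sequentially"
      unfolding filterlim_at_top by blast
    hence inf: "infinite {k. norm ((T ^^ k) x) < Z}"
      by (simp add: infinite_nat_iff_unbounded_le eventually_sequentially not_le)
    obtain s :: "nat \<Rightarrow> nat" where s: "strict_mono s" and sZ0: "\<forall>n. s n \<in> {k. norm ((T ^^ k) x) < Z}"
      using infinite_enumerate[OF inf] by blast
    have sZ: "norm ((T ^^ s n) x) < Z" for n using sZ0 by simp
    have "bounded (range (\<lambda>n. (T ^^ s n) x))"
      unfolding bounded_iff using sZ less_imp_le by blast
    then obtain z r where r: "strict_mono r"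
      and lim: "((\<lambda>n. (T ^^ s n) x) \<circ> r) \<longlonglongrightarrow> z"
      using bounded_imp_convergent_subsequence by blast
    define q where "q = s \<circ> r"
    have q: "strict_mono q" using s r by (simp add: q_def strict_mono_o)
    have limq: "(\<lambda>j. (T ^^ q j) x) \<longlonglongrightarrow> z" using lim by (simp add: q_def o_def)
    define d where "d k = norm ((T ^^ k) x - (T ^^ Suc k) x)" for k
    have "decseq d"
      unfolding decseq_Suc_iff d_def
      using avg_nonexp[OF assms(2)] by simp
    then obtain L where dL: "d \<longlonglongrightarrow> L"
      using decseq_convergent[of d 0] by (auto simp: d_def)
    have const: "norm ((T ^^ m) z - (T ^^ Suc m) z) = L" for m
    proof -
      have sm: "strict_mono (\<lambda>j. q j + m)" using q by (simp add: strict_mono_def)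
      have "(\<lambda>j. d (q j + m)) \<longlonglongrightarrow> L"
        using LIMSEQ_subseq_LIMSEQ[OF dL sm] by (simp add: o_def)
      moreover have "(\<lambda>j. d (q j + m)) = (\<lambda>j. norm ((T ^^ m) ((T ^^ q j) x) - (T ^^ Suc m) ((T ^^ q j) x)))"
        by (simp add: d_def funpow_add add.commute)
      moreover have "(\<lambda>j. norm ((T ^^ m) ((T ^^ q j) x) - (T ^^ Suc m) ((T ^^ q j) x)))
          \<longlonglongrightarrow> norm ((T ^^ m) z - (T ^^ Suc m) z)"
        by (intro tendsto_intros pow_tendsto[OF assms(2) limq])
      ultimately show ?thesis using LIMSEQ_unique by metis
    qed
    define v where "v = T z - z"
    have step: "(T ^^ Suc m) z - (T ^^ m) z = v" for m
    proof (induction m)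
      case 0 then show ?case by (simp add: v_def)
    next
      case (Suc m)
      have "norm (T ((T ^^ m) z) - T ((T ^^ Suc m) z)) = norm ((T ^^ m) z - (T ^^ Suc m) z)"
        using const[of m] const[of "Suc m"] by simp
      hence "T ((T ^^ m) z) - T ((T ^^ Suc m) z) = (T ^^ m) z - (T ^^ Suc m) z"
        by (rule avg_eq[OF assms(2)])
      then show ?case using Suc by (simp add: algebra_simps)
    qed
    have orb: "(T ^^ m) z = z + of_nat m *\<^sub>R v" for m
    proof (induction m)
      case 0 then show ?case by simp
    next
      case (Suc m) then show ?case using step[of m] by (simp add: algebra_simps)
    qed
    have bnd: "real j * norm v \<le> norm (x - z) + Z + norm z" for j
    proof -
      have "j \<le> q j" using q by (simp add: strict_mono_imp_increasing)
      hence "real j * norm v \<le> real (q j) * norm v" by (simp add: mult_right_mono)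
      also have "\<dots> = norm ((T ^^ q j) z - z)" by (simp add: orb)
      also have "\<dots> \<le> norm ((T ^^ q j) z - (T ^^ q j) x) + norm ((T ^^ q j) x) + norm z"
      proof -
        have "(T ^^ q j) z - z = ((T ^^ q j) z - (T ^^ q j) x) + ((T ^^ q j) x - z)" by simp
        hence "norm ((T ^^ q j) z - z) \<le> norm ((T ^^ q j) z - (T ^^ q j) x) + norm ((T ^^ q j) x - z)"
          by (metis norm_triangle_ineq)
        moreover have "norm ((T ^^ q j) x - z) \<le> norm ((T ^^ q j) x) + norm z"
          by (rule norm_triangle_ineq4)
        ultimately show ?thesis by simp
      qed
      also have "\<dots> \<le> norm (x - z) + Z + norm z"
        using pow_nonexp[OF assms(2), of "q j" z x] sZ[of "r j"]
        by (simp add: q_def norm_minus_commute)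
      finally show ?thesis .
    qed
    have "v = 0"
    proof (rule ccontr)
      assume "v \<noteq> 0"
      hence nv: "norm v > 0" by simp
      obtain j :: nat where "(norm (x - z) + Z + norm z) / norm v < real j"
        using reals_Archimedean2 by blast
      hence "norm (x - z) + Z + norm z < real j * norm v" using nv by (simp add: field_simps)
      with bnd[of j] show False by simp
    qed
    hence "z \<in> Fix T" by (simp add: Fix_def v_def)
    with F show False by simp
  qed
next
  assume H: "\<forall>x. filterlim (\<lambda>k. norm ((T ^^ k) x)) at_top sequentially"
  show "Fix T = {}"
  proof (rule ccontr)
    assume "Fix T \<noteq> {}"
    then obtain p where p: "T p = p" by (auto simp: Fix_def)
    have "\<And>k. (T ^^ k) p = p" by (induct_tac k) (simp_all add: p)
    hence "filterlim (\<lambda>k. norm p) at_top (sequentially :: nat filter)"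
      using H[rule_format, of p] by simp
    thus False by (auto simp: filterlim_at_top dest: spec[of _ "norm p + 1"])
  qed
qed

end
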